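(* Let $a,b\ge 3$ and $k\ge 2$ be integers, let $G=CB(k,a,b)$ be the cycle barbell, and let $P_{nb}(G)$ be its non-backtracking transition probability matrix. Then \[ \det\bigl(tI-P_{nb}(G)\bigr)=\frac{1}{16}\,(2t^a-1)(2t^b-1)\Bigl[(2t^a-1)(2t^b-1)t^{2(k-1)}-1\Bigr]. \]
   Context: The cycle barbell $CB(k,a,b)$ is the graph obtained from a cycle $C_a$, a path $P_k$ on $k$ vertices and a cycle $C_b$ by identifying one endpoint of the path with a vertex of $C_a$ and the other endpoint with a vertex of $C_b$. It has $a+b+k-2$ vertices and $a+b+k-1$ edges. The non-backtracking transition probability matrix $P_{nb}(G)$ is indexed by the arcs of $G$ (the ordered pairs $(u,v)$ with $\{u,v\}$ an edge); its entry from $(u,v)$ to $(v,w)$ is $1/(\deg(v)-1)$ for each neighbor $w\neq u$ of $v$, and all other entries are $0$. *)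

theory Defs
  imports "Jordan_Normal_Form.Char_Poly" "HOL-Library.Product_Lexorder"
begin

text \<open>Simple graphs on natural-number vertices, given by a vertex set and a set of
  undirected edges (2-element sets).\<close>

definition adj :: "nat set set \<Rightarrow> nat \<Rightarrow> nat \<Rightarrow> bool" where
  "adj E u v \<longleftrightarrow> u \<noteq> v \<and> {u, v} \<in> E"

definition graph_deg :: "nat set \<Rightarrow> nat set set \<Rightarrow> nat \<Rightarrow> nat" where
  "graph_deg V E v = card {w \<in> V. adj E v w}"

definition arcs :: "nat set \<Rightarrow> nat set set \<Rightarrow> (nat \<times> nat) set" where
  "arcs V E = {(u, v). u \<in> V \<and> v \<in> V \<and> adj E u v}"

definition arc_list :: "nat set \<Rightarrow> nat set set \<Rightarrow> (nat \<times> nat) list" where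
  "arc_list V E = sorted_list_of_set (arcs V E)"

definition P_nb :: "nat set \<Rightarrow> nat set set \<Rightarrow> real mat" where
  "P_nb V E = (let A = arc_list V E; n = length A in
     mat n n (\<lambda>(i, j). (case A ! i of (u, v) \<Rightarrow> case A ! j of (x, w) \<Rightarrow>
        if x = v \<and> w \<noteq> u then 1 / (real (graph_deg V E v) - 1) else 0)))"

text \<open>The cycle barbell CB(k,a,b): cycle C_a on vertices 0..a-1, path P_k with vertex
  sequence 0, a, a+1, ..., a+k-2, cycle C_b on vertices a+k-2, ..., a+k-2+b-1.\<close>

definition cb_vertices :: "nat \<Rightarrow> nat \<Rightarrow> nat \<Rightarrow> nat set" where
  "cb_vertices k a b = {0..<a + b + k - 2}"

definition cb_path :: "nat \<Rightarrow> nat \<Rightarrow> nat list" where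
  "cb_path k a = 0 # [a..<a + k - 1]"

definition cb_edges :: "nat \<Rightarrow> nat \<Rightarrow> nat \<Rightarrow> nat set set" where
  "cb_edges k a b =
     {{i, Suc i mod a} | i. i < a}
   \<union> {{cb_path k a ! i, cb_path k a ! Suc i} | i. i < k - 1}
   \<union> {{a + k - 2 + j, a + k - 2 + (Suc j mod b)} | j. j < b}"

end

theory Submission
  imports Defs
begin
definition detL :: "'a list \<Rightarrow> ('a \<Rightarrow> 'a \<Rightarrow> real) \<Rightarrow> real" where
  "detL L M = det (mat (length L) (length L) (\<lambda>(i,j). M (L!i) (L!j)))"

lemma detL_cong:
  assumes "\<And>r s. r \<in> set L \<Longrightarrow> s \<in> set L \<Longrightarrow> M r s = M' r s"
  shows "detL L M = detL L M'"
  unfolding detL_def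
  by (rule arg_cong[where f=det], rule eq_matI, auto simp: assms)

lemma detL_map: "detL (map f L) M = detL L (\<lambda>i j. M (f i) (f j))"
  unfolding detL_def
  by (rule arg_cong[where f=det], rule eq_matI, auto)

lemma detL_single: "detL [x] M = M x x"
  unfolding detL_def by (subst det_single, auto)

lemma detL_pivot:
  assumes d: "M x x \<noteq> 0"
  shows "detL (x # L) M = M x x * detL L (\<lambda>r s. M r s - M r x * M x s / M x x)"
proof -
  define n where "n = length L"
  define A where "A = mat (Suc n) (Suc n) (\<lambda>(i,j). M ((x#L)!i) ((x#L)!j))"
  define E where "E = mat (Suc n) (Suc n) (\<lambda>(i,j). if i = j then 1 else if j = 0 then - A$$(i,0) / M x x else (0::real))"
  have A: "A \<in> carrier_mat (Suc n) (Suc n)" unfolding A_def by auto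
  have E: "E \<in> carrier_mat (Suc n) (Suc n)" unfolding E_def by auto
  have detE: "det E = 1"
    by (subst det_lower_triangular[OF _ E], auto simp: E_def diag_mat_def prod_list_zero_iff
       intro!: prod_list_neutral)
  have B: "(E * A) $$ (i,j) = (if i = 0 then A $$ (0,j) else A $$ (i,j) - A$$(i,0) / M x x * A $$ (0,j))"
    if i: "i < Suc n" and j: "j < Suc n" for i j
  proof -
    have "(E * A) $$ (i,j) = (\<Sum>k<Suc n. E $$ (i,k) * A $$ (k,j))"
      using i j A E by (simp add: scalar_prod_def atLeast0LessThan)
    also have "\<dots> = (\<Sum>k<Suc n. (if k = i then A $$ (i,j) else 0) +
        (if k = 0 \<and> i \<noteq> 0 then - A$$(i,0) / M x x * A $$ (0,j) else 0))"
      by (rule sum.cong, auto simp: E_def i)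
    also have "\<dots> = (if i = 0 then A $$ (0,j) else A $$ (i,j) - A$$(i,0) / M x x * A $$ (0,j))"
      using i by (simp add: sum.distrib)
    finally show ?thesis .
  qed
  have A00: "A $$ (0,0) = M x x" unfolding A_def by simp
  have "det A = det (E * A)" using det_mult[OF E A] detE by simp
  also have "\<dots> = (\<Sum>i<Suc n. (E * A) $$ (i,0) * cofactor (E * A) i 0)"
    by (rule laplace_expansion_column, insert E A, auto)
  also have "\<dots> = (\<Sum>i<Suc n. if i = 0 then M x x * cofactor (E * A) 0 0 else 0)"
    by (rule sum.cong, auto simp: B A00 d)
  also have "\<dots> = M x x * det (mat_delete (E * A) 0 0)"
    by (simp add: cofactor_def)
  also have "mat_delete (E * A) 0 0 = mat n n (\<lambda>(i,j). (\<lambda>r s. M r s - M r x * M x s / M x x) (L!i) (L!j))"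
  proof (rule eq_matI)
    fix i j assume ij: "i < dim_row (mat n n (\<lambda>(i,j). (\<lambda>r s. M r s - M r x * M x s / M x x) (L!i) (L!j)))"
       "j < dim_col (mat n n (\<lambda>(i,j). (\<lambda>r s. M r s - M r x * M x s / M x x) (L!i) (L!j)))"
    have "mat_delete (E * A) 0 0 $$ (i,j) = (E * A) $$ (Suc i, Suc j)"
      using ij E A by (simp add: mat_delete_def)
    also have "\<dots> = A $$ (Suc i, Suc j) - A$$(Suc i,0) / M x x * A $$ (0,Suc j)"
      using ij by (subst B, auto)
    finally show "mat_delete (E * A) 0 0 $$ (i,j) = mat n n (\<lambda>(i,j). (\<lambda>r s. M r s - M r x * M x s / M x x) (L!i) (L!j)) $$ (i,j)"
      using ij by (simp add: A_def)
  qed (insert E A, auto)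
  finally show ?thesis unfolding detL_def A_def n_def by simp
qed

lemma det_perm_sim:
  assumes A: "A \<in> carrier_mat n n" and p: "p permutes {0..<n}"
  shows "det (mat n n (\<lambda>(i,j). A $$ (p i, p j))) = det A"
proof -
  define C where "C = mat n n (\<lambda>(i,j). A $$ (i, p j))"
  have C: "C \<in> carrier_mat n n" unfolding C_def by auto
  have pl: "i < n \<Longrightarrow> p i < n" for i using p by (simp add: permutes_in_image)
  have "mat n n (\<lambda>(i,j). A $$ (p i, p j)) = mat n n (\<lambda>(i,j). C $$ (p i, j))"
    by (rule eq_matI, auto simp: C_def pl)
  hence 1: "det (mat n n (\<lambda>(i,j). A $$ (p i, p j))) = signof p * det C"
    using det_permute_rows[OF C p] by simp
  have "det C = det (transpose_mat C)" using det_transpose[OF C] by simp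
  also have "transpose_mat C = mat n n (\<lambda>(i,j). (transpose_mat A) $$ (p i, j))"
    by (rule eq_matI, insert A, auto simp: C_def pl)
  also have "det \<dots> = signof p * det (transpose_mat A)"
    by (rule det_permute_rows[OF _ p], insert A, auto)
  also have "det (transpose_mat A) = det A" using det_transpose[OF A] .
  finally have "det C = signof p * det A" .
  with 1 show ?thesis by (simp add: sign_def)
qed

lemma detL_perm:
  assumes d1: "distinct L1" and d2: "distinct L2" and s: "set L1 = set L2"
  shows "detL L1 M = detL L2 M"
proof -
  define n where "n = length L1"
  have n2: "length L2 = n" using distinct_card[OF d1] distinct_card[OF d2] s n_def by metis
  define p where "p i = (if i < n then (SOME j. j < n \<and> L1 ! j = L2 ! i) else i)" for i
  have mem: "i < n \<Longrightarrow> \<exists>j. j < n \<and> L1 ! j = L2 ! i" for i using s n2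
    by (metis in_set_conv_nth n_def nth_mem)
  have L2p: "i < n \<Longrightarrow> L2 ! i = L1 ! p i" for i using someI_ex[OF mem[of i]] by (simp add: p_def)
  have pl: "i < n \<Longrightarrow> p i < n" for i using someI_ex[OF mem[of i]] by (simp add: p_def)
  have inj: "inj_on p {0..<n}"
  proof (rule inj_onI)
    fix i j assume ij: "i \<in> {0..<n}" "j \<in> {0..<n}" "p i = p j"
    hence "L2 ! i = L2 ! j" using L2p by auto
    thus "i = j" using ij d2 n2 by (simp add: nth_eq_iff_index_eq)
  qed
  have img: "p ` {0..<n} = {0..<n}"
    by (rule endo_inj_surj[OF _ _ inj], auto simp: pl)
  have p: "p permutes {0..<n}"
    by (rule bij_imp_permutes, simp add: bij_betw_def inj img, simp add: p_def)
  define A where "A = mat n n (\<lambda>(i,j). M (L1!i) (L1!j))"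
  have A: "A \<in> carrier_mat n n" unfolding A_def by auto
  have "detL L2 M = det (mat n n (\<lambda>(i,j). A $$ (p i, p j)))"
    unfolding detL_def n2
    by (rule arg_cong[where f=det], rule eq_matI, auto simp: A_def L2p pl)
  also have "\<dots> = det A" by (rule det_perm_sim[OF A p])
  finally show ?thesis unfolding detL_def A_def n_def by simp
qed

declare upt_Suc[simp del]

lemma chain_elim:
  fixes f :: "nat \<Rightarrow> 'a" and t :: real
  assumes t: "t \<noteq> 0"
    and dist: "distinct (map f [0..<m] @ R)"
    and y: "f m \<in> set R"
    and rows: "\<And>l s. l < m \<Longrightarrow> s \<in> set (map f [0..<m] @ R) \<Longrightarrow>
        M (f l) s = (if s = f l then t else if s = f (Suc l) then -1 else 0)"
    and cols: "\<And>l r. 0 < l \<Longrightarrow> l < m \<Longrightarrow> r \<in> set R \<Longrightarrow> M r (f l) = 0"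
  shows "detL (map f [0..<m] @ R) M =
     t^m * detL R (\<lambda>r s. M r s + (if 0 < m \<and> s = f m then M r (f 0) / t^m else 0))"
  using assms
proof (induction m arbitrary: f M)
  case 0
  then show ?case by simp
next
  case (Suc m f M)
  define g where "g = f \<circ> Suc"
  have split: "map f [0..<Suc m] = f 0 # map g [0..<m]"
    unfolding g_def by (simp add: map_upt_Suc del: upt_Suc)
  have inj: "\<And>i j. i < Suc m \<Longrightarrow> j < Suc m \<Longrightarrow> f i = f j \<longleftrightarrow> i = j"
  proof -
    have "distinct (map f [0..<Suc m])" using Suc.prems(2) by (simp only: distinct_append)
    hence injon: "inj_on f {0..<Suc m}" by (simp only: distinct_map set_upt)
    show "\<And>i j. i < Suc m \<Longrightarrow> j < Suc m \<Longrightarrow> f i = f j \<longleftrightarrow> i = j"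
      using inj_on_eq_iff[OF injon] by simp
  qed
  have disj: "set (map f [0..<Suc m]) \<inter> set R = {}" using Suc.prems(2) by (simp only: distinct_append)
  have notR: "\<And>i. i < Suc m \<Longrightarrow> f i \<notin> set R" using disj by (auto simp del: upt_Suc simp: disjoint_iff)
  have f0: "M (f 0) (f 0) = t" using Suc.prems(4)[of 0 "f 0"] by simp
  define M1 where "M1 r s = M r s + (if s = g 0 then M r (f 0) / t else 0)" for r s
  have "detL (map f [0..<Suc m] @ R) M = t * detL (map g [0..<m] @ R) (\<lambda>r s. M r s - M r (f 0) * M (f 0) s / M (f 0) (f 0))"
    unfolding split using detL_pivot[of M "f 0"] f0 Suc.prems(1) by simp
  also have "detL (map g [0..<m] @ R) (\<lambda>r s. M r s - M r (f 0) * M (f 0) s / M (f 0) (f 0)) = detL (map g [0..<m] @ R) M1"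
  proof (rule detL_cong)
    fix r s assume r: "r \<in> set (map g [0..<m] @ R)" and s: "s \<in> set (map g [0..<m] @ R)"
    have sf: "s \<in> set (map f [0..<Suc m] @ R)" using s split by auto
    have "s \<noteq> f 0" using s Suc.prems(2) split by auto
    hence "M (f 0) s = (if s = g 0 then -1 else 0)" using Suc.prems(4)[OF _ sf, of 0] by (simp add: g_def)
    thus "M r s - M r (f 0) * M (f 0) s / M (f 0) (f 0) = M1 r s" by (simp add: f0 M1_def)
  qed
  also have "detL (map g [0..<m] @ R) M1 = t^m * detL R (\<lambda>r s. M1 r s + (if 0 < m \<and> s = g m then M1 r (g 0) / t^m else 0))"
  proof (rule Suc.IH)
    show "t \<noteq> 0" by fact
    show "distinct (map g [0..<m] @ R)" using Suc.prems(2) split by simp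
    show "g m \<in> set R" using Suc.prems(3) by (simp add: g_def)
  next
    fix l s assume l: "l < m" and s: "s \<in> set (map g [0..<m] @ R)"
    have sf: "s \<in> set (map f [0..<Suc m] @ R)" using s split by auto
    have f0in: "f 0 \<in> set (map f [0..<Suc m] @ R)" by simp
    have "M (f (Suc l)) (f 0) = 0"
    proof -
      have "f 0 \<noteq> f (Suc l)" using inj[of 0 "Suc l"] l by simp
      moreover have "f 0 \<noteq> f (Suc (Suc l))"
      proof (cases "Suc (Suc l) < Suc m")
        case True thus ?thesis using inj[of 0 "Suc (Suc l)"] by simp
      next
        case False hence "Suc (Suc l) = Suc m" using l by simp
        thus ?thesis using Suc.prems(3) notR[of 0] by auto
      qed
      ultimately show ?thesis using Suc.prems(4)[OF _ f0in, of "Suc l"] l by simp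
    qed
    thus "M1 (g l) s = (if s = g l then t else if s = g (Suc l) then -1 else 0)"
      using Suc.prems(4)[OF _ sf, of "Suc l"] l by (simp add: M1_def g_def)
  next
    fix l r assume l: "0 < l" "l < m" and r: "r \<in> set R"
    have "g l \<noteq> g 0" using inj[of "Suc l" 1] l by (simp add: g_def)
    thus "M1 r (g l) = 0" using Suc.prems(5)[OF _ _ r, of "Suc l"] l by (simp add: M1_def g_def)
  qed
  also have "detL R (\<lambda>r s. M1 r s + (if 0 < m \<and> s = g m then M1 r (g 0) / t^m else 0)) =
      detL R (\<lambda>r s. M r s + (if 0 < Suc m \<and> s = f (Suc m) then M r (f 0) / t^Suc m else 0))"
  proof (rule detL_cong)
    fix r s assume r: "r \<in> set R" and s: "s \<in> set R"
    show "M1 r s + (if 0 < m \<and> s = g m then M1 r (g 0) / t^m else 0) =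
      M r s + (if 0 < Suc m \<and> s = f (Suc m) then M r (f 0) / t^Suc m else 0)"
    proof (cases "m = 0")
      case True thus ?thesis by (simp add: M1_def g_def)
    next
      case False
      have "s \<noteq> g 0" using s notR[of 1] False by (auto simp: g_def)
      moreover have "M r (g 0) = 0" using Suc.prems(5)[OF _ _ r, of 1] False by (simp add: g_def)
      ultimately show ?thesis using False t by (simp add: M1_def g_def field_simps)
    qed
  qed
  finally show ?case by simp
qed


definition chl :: "((nat \<Rightarrow> 'a) \<times> nat) list \<Rightarrow> 'a list" where
  "chl cs = concat (map (\<lambda>(f,m). map f [0..<m]) cs)"

definition corr :: "real \<Rightarrow> ((nat \<Rightarrow> 'a) \<times> nat) list \<Rightarrow> ('a \<Rightarrow> 'a \<Rightarrow> real) \<Rightarrow> 'a \<Rightarrow> 'a \<Rightarrow> real" where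
  "corr t cs M r s = sum_list (map (\<lambda>(f,m). if 0 < m \<and> s = f m then M r (f 0) / t^m else 0) cs)"

lemma chl_Nil[simp]: "chl [] = []" by (simp add: chl_def)
lemma chl_Cons[simp]: "chl ((f,m) # cs) = map f [0..<m] @ chl cs" by (simp add: chl_def)
lemma corr_Nil[simp]: "corr t [] M r s = 0" by (simp add: corr_def)
lemma corr_Cons[simp]: "corr t ((f,m) # cs) M r s = (if 0 < m \<and> s = f m then M r (f 0) / t^m else 0) + corr t cs M r s"
  by (simp add: corr_def)

lemma mem_chl: "(f,m) \<in> set cs \<Longrightarrow> l < m \<Longrightarrow> f l \<in> set (chl cs)"
  by (induction cs) (auto simp: atLeast0LessThan)

lemma corr_cong:
  assumes "\<And>f m. (f,m) \<in> set cs \<Longrightarrow> 0 < m \<Longrightarrow> M r (f 0) = M' r (f 0)"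
  shows "corr t cs M r s = corr t cs M' r s"
  unfolding corr_def
  by (rule arg_cong[where f=sum_list], rule map_cong, auto simp: assms split: prod.splits)

lemma multi_chain:
  fixes t :: real
  assumes t: "t \<noteq> 0" and dist: "distinct (chl cs @ R)"
    and ys: "\<And>f m. (f,m) \<in> set cs \<Longrightarrow> f m \<in> set R"
    and rows: "\<And>f m l s. (f,m) \<in> set cs \<Longrightarrow> l < m \<Longrightarrow> s \<in> set (chl cs @ R) \<Longrightarrow>
        M (f l) s = (if s = f l then t else if s = f (Suc l) then -1 else 0)"
    and cols: "\<And>f m l r. (f,m) \<in> set cs \<Longrightarrow> 0 < l \<Longrightarrow> l < m \<Longrightarrow> r \<in> set (chl cs @ R) \<Longrightarrow>
        r \<noteq> f (l - 1) \<Longrightarrow> r \<noteq> f l \<Longrightarrow> M r (f l) = 0"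
  shows "detL (chl cs @ R) M = t^(sum_list (map snd cs)) * detL R (\<lambda>r s. M r s + corr t cs M r s)"
  using dist ys rows cols
proof (induction cs arbitrary: M)
  case Nil
  then show ?case by simp
next
  case (Cons c cs M)
  obtain f m where c: "c = (f,m)" by (cases c)
  define R' where "R' = chl cs @ R"
  have L: "chl (c # cs) @ R = map f [0..<m] @ R'" by (simp add: c R'_def)
  have d1: "distinct (map f [0..<m] @ R')" using Cons.prems(1) L by simp
  have disj1: "\<And>l. l < m \<Longrightarrow> f l \<notin> set R'"
    using d1 by (auto simp: atLeast0LessThan)
  have disj2: "\<And>x. x \<in> set (chl cs) \<Longrightarrow> x \<notin> set R"
    using Cons.prems(1) by (auto simp: c)
  define M' where "M' r s = M r s + (if 0 < m \<and> s = f m then M r (f 0) / t^m else 0)" for r s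
  have "detL (chl (c # cs) @ R) M = t^m * detL R' M'"
    unfolding L M'_def
  proof (rule chain_elim[OF t d1])
    show "f m \<in> set R'" using Cons.prems(2)[of f m] by (simp add: c R'_def)
  next
    fix l s assume "l < m" "s \<in> set (map f [0..<m] @ R')"
    thus "M (f l) s = (if s = f l then t else if s = f (Suc l) then -1 else 0)"
      using Cons.prems(3)[of f m l s] L by (simp add: c R'_def)
  next
    fix l r assume l: "0 < l" "l < m" and r: "r \<in> set R'"
    have "l - 1 < m" using l by simp
    hence "r \<noteq> f (l - 1)" using disj1[of "l - 1"] r by auto
    moreover have "r \<noteq> f l" using disj1[of l] r l by auto
    ultimately show "M r (f l) = 0" using Cons.prems(4)[of f m l r] l r L by (simp add: c R'_def)
  qed
  also have "detL R' M' = t^(sum_list (map snd cs)) * detL R (\<lambda>r s. M' r s + corr t cs M' r s)"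
    unfolding R'_def
  proof (rule Cons.IH)
    show "distinct (chl cs @ R)" using Cons.prems(1) by (simp add: c)
    show "\<And>g n. (g, n) \<in> set cs \<Longrightarrow> g n \<in> set R" using Cons.prems(2) by simp
  next
    fix g n l s assume gn: "(g,n) \<in> set cs" and l: "l < n" and s: "s \<in> set (chl cs @ R)"
    have sL: "s \<in> set (chl (c # cs) @ R)" using s by (auto simp: c)
    have "M (g l) (f 0) = 0" if m0: "0 < m"
    proof -
      have f0: "f 0 \<in> set (chl (c # cs) @ R)" using m0 by (simp add: c atLeast0LessThan)
      have gl: "g l \<in> set R'" using mem_chl[OF gn l] by (simp add: R'_def)
      have "f 0 \<noteq> g l" using disj1[of 0] m0 gl by auto
      moreover have "f 0 \<noteq> g (Suc l)"
      proof (cases "Suc l < n")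
        case True
        hence "g (Suc l) \<in> set R'" using mem_chl[OF gn] by (simp add: R'_def)
        thus ?thesis using disj1[of 0] m0 by auto
      next
        case False hence "Suc l = n" using l by simp
        hence "g (Suc l) \<in> set R'" using Cons.prems(2)[of g n] gn by (simp add: R'_def)
        thus ?thesis using disj1[of 0] m0 by auto
      qed
      ultimately show ?thesis using Cons.prems(3)[of g n l "f 0", OF _ l f0] gn by simp
    qed
    thus "M' (g l) s = (if s = g l then t else if s = g (Suc l) then -1 else 0)"
      using Cons.prems(3)[of g n l s, OF _ l sL] gn by (auto simp: M'_def)
  next
    fix g n l r assume gn: "(g,n) \<in> set cs" and l: "0 < l" "l < n" and r: "r \<in> set (chl cs @ R)"
      and rne: "r \<noteq> g (l - 1)" and rne2: "r \<noteq> g l"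
    have rL: "r \<in> set (chl (c # cs) @ R)" using r by (auto simp: c)
    have "g l \<noteq> f m" using mem_chl[OF gn l(2)] disj2 Cons.prems(2)[of f m] by (auto simp: c)
    thus "M' r (g l) = 0" using Cons.prems(4)[of g n l r, OF _ l rL rne rne2] gn by (simp add: M'_def)
  qed
  also have "detL R (\<lambda>r s. M' r s + corr t cs M' r s) = detL R (\<lambda>r s. M r s + corr t (c # cs) M r s)"
  proof (rule detL_cong)
    fix r s assume r: "r \<in> set R" and s: "s \<in> set R"
    have "corr t cs M' r s = corr t cs M r s"
    proof (rule corr_cong)
      fix g n assume gn: "(g,n) \<in> set cs" and n: "0 < n"
      have "g 0 \<noteq> f m" using mem_chl[OF gn n] disj2 Cons.prems(2)[of f m] by (auto simp: c)
      thus "M' r (g 0) = M r (g 0)" by (simp add: M'_def)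
    qed
    thus "M' r s + corr t cs M' r s = M r s + corr t (c # cs) M r s" by (simp add: M'_def c)
  qed
  finally show ?case by (simp add: c power_add)
qed

locale cbl =
  fixes k a b :: nat
  assumes a3: "a \<ge> 3" and b3: "b \<ge> 3" and k2: "k \<ge> 2"
begin

abbreviation "V \<equiv> cb_vertices k a b"
abbreviation "E \<equiv> cb_edges k a b"
definition "c = a + k - 2"

definition nbrset :: "nat \<Rightarrow> nat set" where
  "nbrset u = (if u = 0 then {1, a - 1, a}
     else if u < a then {u - 1, if u = a - 1 then 0 else u + 1}
     else if u < c then {if u = a then 0 else u - 1, u + 1}
     else if u = c then {if k = 2 then 0 else c - 1, c + 1, c + b - 1}
     else {u - 1, if u = c + b - 1 then c else u + 1})"

lemma path_nth: "i < k \<Longrightarrow> cb_path k a ! i = (if i = 0 then 0 else a + i - 1)"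
  unfolding cb_path_def by (cases i) (auto simp: nth_Cons')

lemma edge_iff: "{u, w} \<in> E \<longleftrightarrow>
   (u < a \<and> w = Suc u mod a) \<or> (w < a \<and> u = Suc w mod a) \<or>
   (\<exists>i < k - 1. (u = cb_path k a ! i \<and> w = cb_path k a ! Suc i) \<or> (w = cb_path k a ! i \<and> u = cb_path k a ! Suc i)) \<or>
   (\<exists>j < b. (u = c + j \<and> w = c + Suc j mod b) \<or> (w = c + j \<and> u = c + Suc j mod b))"
  unfolding cb_edges_def c_def by (auto simp: doubleton_eq_iff)

lemma eA: "u < a \<Longrightarrow> Suc u mod a = (if Suc u = a then 0 else Suc u)"
  by auto

lemma eP: "(\<exists>i < k - 1. (u = cb_path k a ! i \<and> w = cb_path k a ! Suc i) \<or> (w = cb_path k a ! i \<and> u = cb_path k a ! Suc i))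
  \<longleftrightarrow> (u = 0 \<and> w = a) \<or> (w = 0 \<and> u = a) \<or> (a \<le> u \<and> u < c \<and> w = Suc u) \<or> (a \<le> w \<and> w < c \<and> u = Suc w)"
proof
  assume "\<exists>i < k - 1. (u = cb_path k a ! i \<and> w = cb_path k a ! Suc i) \<or> (w = cb_path k a ! i \<and> u = cb_path k a ! Suc i)"
  then obtain i where i: "i < k - 1" and h: "(u = cb_path k a ! i \<and> w = cb_path k a ! Suc i) \<or> (w = cb_path k a ! i \<and> u = cb_path k a ! Suc i)" by blast
  have "i < k" "Suc i < k" using i by auto
  with h show "(u = 0 \<and> w = a) \<or> (w = 0 \<and> u = a) \<or> (a \<le> u \<and> u < c \<and> w = Suc u) \<or> (a \<le> w \<and> w < c \<and> u = Suc w)"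
    using i by (auto simp: path_nth c_def split: if_splits)
next
  assume h: "(u = 0 \<and> w = a) \<or> (w = 0 \<and> u = a) \<or> (a \<le> u \<and> u < c \<and> w = Suc u) \<or> (a \<le> w \<and> w < c \<and> u = Suc w)"
  have p0: "cb_path k a ! 0 = 0" "cb_path k a ! 1 = a" using k2 by (auto simp: path_nth)
  show "\<exists>i < k - 1. (u = cb_path k a ! i \<and> w = cb_path k a ! Suc i) \<or> (w = cb_path k a ! i \<and> u = cb_path k a ! Suc i)"
  proof (cases "(u = 0 \<and> w = a) \<or> (w = 0 \<and> u = a)")
    case True thus ?thesis using k2 p0 by (intro exI[of _ 0]) auto
  next
    case False
    show ?thesis
    proof (cases "a \<le> u \<and> u < c \<and> w = Suc u")
      case True
      thus ?thesis using k2 by (intro exI[of _ "u - a + 1"]) (auto simp: path_nth c_def)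
    next
      case F2: False
      hence "a \<le> w \<and> w < c \<and> u = Suc w" using h False by auto
      thus ?thesis using k2 by (intro exI[of _ "w - a + 1"]) (auto simp: path_nth c_def)
    qed
  qed
qed

lemma eB: "(\<exists>j < b. (u = c + j \<and> w = c + Suc j mod b) \<or> (w = c + j \<and> u = c + Suc j mod b))
  \<longleftrightarrow> (c \<le> u \<and> u + 1 < c + b \<and> w = Suc u) \<or> (u = c + b - 1 \<and> w = c) \<or>
      (c \<le> w \<and> w + 1 < c + b \<and> u = Suc w) \<or> (w = c + b - 1 \<and> u = c)"
proof
  assume "\<exists>j < b. (u = c + j \<and> w = c + Suc j mod b) \<or> (w = c + j \<and> u = c + Suc j mod b)"
  then obtain j where j: "j < b" and h: "(u = c + j \<and> w = c + Suc j mod b) \<or> (w = c + j \<and> u = c + Suc j mod b)" by blast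
  have "Suc j mod b = (if Suc j = b then 0 else Suc j)" using j by auto
  thus "(c \<le> u \<and> u + 1 < c + b \<and> w = Suc u) \<or> (u = c + b - 1 \<and> w = c) \<or>
      (c \<le> w \<and> w + 1 < c + b \<and> u = Suc w) \<or> (w = c + b - 1 \<and> u = c)" using h j by (auto split: if_splits)
next
  assume h: "(c \<le> u \<and> u + 1 < c + b \<and> w = Suc u) \<or> (u = c + b - 1 \<and> w = c) \<or>
      (c \<le> w \<and> w + 1 < c + b \<and> u = Suc w) \<or> (w = c + b - 1 \<and> u = c)"
  show "\<exists>j < b. (u = c + j \<and> w = c + Suc j mod b) \<or> (w = c + j \<and> u = c + Suc j mod b)"
  proof -
    { assume "c \<le> u \<and> u + 1 < c + b \<and> w = Suc u"
      hence ?thesis by (intro exI[of _ "u - c"]) auto }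
    moreover
    { assume "c \<le> w \<and> w + 1 < c + b \<and> u = Suc w"
      hence ?thesis by (intro exI[of _ "w - c"]) auto }
    moreover
    { assume "(u = c + b - 1 \<and> w = c) \<or> (w = c + b - 1 \<and> u = c)"
      hence ?thesis using b3 by (intro exI[of _ "b - 1"]) auto }
    ultimately show ?thesis using h by blast
  qed
qed

lemma c_ge: "c \<ge> a" unfolding c_def using k2 by auto
end

context cbl begin
lemma adj_iff: "adj E u w \<longleftrightarrow> u \<noteq> w \<and>
   ((u < a \<and> w = (if Suc u = a then 0 else Suc u)) \<or> (w < a \<and> u = (if Suc w = a then 0 else Suc w)) \<or>
   (u = 0 \<and> w = a) \<or> (w = 0 \<and> u = a) \<or> (a \<le> u \<and> u < c \<and> w = Suc u) \<or> (a \<le> w \<and> w < c \<and> u = Suc w) \<or>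
   (c \<le> u \<and> u + 1 < c + b \<and> w = Suc u) \<or> (u = c + b - 1 \<and> w = c) \<or>
      (c \<le> w \<and> w + 1 < c + b \<and> u = Suc w) \<or> (w = c + b - 1 \<and> u = c))"
proof -
  have h1: "(u < a \<and> w = Suc u mod a) \<longleftrightarrow> (u < a \<and> w = (if Suc u = a then 0 else Suc u))" by auto
  have h2: "(w < a \<and> u = Suc w mod a) \<longleftrightarrow> (w < a \<and> u = (if Suc w = a then 0 else Suc w))" by auto
  show ?thesis by (simp only: adj_def edge_iff eP eB h1 h2 disj_assoc)
qed

lemma V_iff: "u \<in> V \<longleftrightarrow> u < c + b" unfolding cb_vertices_def c_def using k2 by auto

lemma adj_nbr: assumes "adj E u w" "u < c + b" shows "w \<in> nbrset u"
proof -
  obtain a' where a: "a = a' + 3" using a3 by (metis add.commute le_Suc_ex)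
  obtain b' where b: "b = b' + 3" using b3 by (metis add.commute le_Suc_ex)
  obtain k' where k: "k = k' + 2" using k2 by (metis add.commute le_Suc_ex)
  have c: "c = a' + k' + 3" using c_def a k by simp
  show ?thesis using assms unfolding adj_iff nbrset_def c_def
    apply (elim conjE disjE)
    apply (simp_all add: a b k split: if_splits)
    done
qed

lemma nbr_adj: assumes w: "w \<in> nbrset u" and ub: "u < c + b" shows "w < c + b \<and> adj E u w"
proof -
  obtain a' where a: "a = a' + 3" using a3 by (metis add.commute le_Suc_ex)
  obtain b' where b: "b = b' + 3" using b3 by (metis add.commute le_Suc_ex)
  obtain k' where k: "k = k' + 2" using k2 by (metis add.commute le_Suc_ex)
  have c: "c = a' + k' + 3" using c_def a k by simp
  consider "u = 0" | "0 < u" "u < a" | "a \<le> u" "u < c" | "u = c" | "c < u" by linarith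
  thus ?thesis
  proof cases
    case 1
    hence "w = 1 \<or> w = a - 1 \<or> w = a" using w unfolding nbrset_def by auto
    thus ?thesis unfolding adj_iff 1 unfolding c unfolding a b by auto
  next
    case 2
    then obtain u' where u: "u = Suc u'" by (cases u) auto
    have "w = u' \<or> w = (if u = a - 1 then 0 else u + 1)" using w 2 unfolding nbrset_def u by auto
    thus ?thesis unfolding adj_iff c using 2 unfolding a b u by auto
  next
    case 3
    then obtain u' where u: "u = Suc u'" using a3 by (cases u) auto
    have "w = (if u = a then 0 else u') \<or> w = u + 1" using w 3 unfolding nbrset_def u by auto
    moreover have "adj E u (u + 1)" using 3 unfolding adj_iff by simp
    moreover have "u \<noteq> a \<Longrightarrow> adj E u u'" using 3 unfolding adj_iff u by simp
    moreover have "u = a \<Longrightarrow> adj E u 0" using 3 a3 unfolding adj_iff by simp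
    moreover have "u + 1 < c + b" using 3 b3 by simp
    ultimately show ?thesis using 3 u by (auto split: if_splits)
  next
    case 4
    have ns: "nbrset c = {if k = 2 then 0 else c - 1, c + 1, c + b - 1}" using c_ge a3 by (simp add: nbrset_def)
    have w': "w = (if k = 2 then 0 else c - 1) \<or> w = c + 1 \<or> w = c + b - 1" using w ns 4 by auto
    have A1: "adj E c (c + 1)" using b3 unfolding adj_iff by simp
    have A2: "adj E c (c + b - 1)" using b3 c_ge unfolding adj_iff by simp
    have A3: "k = 2 \<Longrightarrow> adj E c 0" using a3 unfolding adj_iff c_def by simp
    have A4: "adj E c (c - 1)" if k3: "k \<noteq> 2"
    proof -
      define d where "d = c - 1"
      have d: "c = Suc d" "a \<le> d" using k3 k2 unfolding d_def c_def by arith+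
      show ?thesis unfolding d(1) adj_iff using d by simp
    qed
    show ?thesis using w' A1 A2 A3 A4 4 b3 by (cases "k = 2") auto
  next
    case 5
    then obtain u' where u: "u = Suc u'" by (cases u) auto
    have w': "w = u' \<or> w = (if u = c + b - 1 then c else u + 1)" using w 5 c_ge unfolding nbrset_def u by auto
    have A1: "adj E u u'" using 5 ub unfolding adj_iff u by simp
    have A2: "u = c + b - 1 \<Longrightarrow> adj E u c" using 5 unfolding adj_iff by simp
    have A3: "adj E u (u + 1)" if ne: "u \<noteq> c + b - 1"
    proof -
      have "Suc u < c + b" using ne ub by arith
      thus ?thesis using 5 unfolding adj_iff by simp
    qed
    show ?thesis using w' A1 A2 A3 5 ub u by (auto split: if_splits)
  qed
qed
end

lemma pivot_step:
  assumes d: "M x x = d" and d0: "d \<noteq> 0"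
    and h: "\<And>r s. r \<in> set L \<Longrightarrow> s \<in> set L \<Longrightarrow> M r s - M r x * M x s / d = M' r s"
  shows "detL (x # L) M = d * detL L M'"
proof -
  have "detL (x # L) M = M x x * detL L (\<lambda>r s. M r s - M r x * M x s / M x x)"
    by (rule detL_pivot, simp add: d d0)
  also have "detL L (\<lambda>r s. M r s - M r x * M x s / M x x) = detL L M'"
    by (rule detL_cong, simp add: d h)
  finally show ?thesis by (simp add: d)
qed

lemma det6:
  fixes t P Q W :: real
  assumes t: "t \<noteq> 0" and tp: "t - P \<noteq> 0" and tq: "t - Q \<noteq> 0"
  shows "detL [0..<6] (\<lambda>i j. [[t-P,0,0,0,0,-W],[0,t-P,0,0,0,-W],[-P,-P,t,0,0,0],
     [0,0,-W,t-Q,0,0],[0,0,-W,0,t-Q,0],[0,0,0,-Q,-Q,t]] ! i ! j)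
   = (t-P)^2 * (t-Q)^2 * t^2 - 4 * P * Q * W^2 * (t-P) * (t-Q)"
proof -
  define R where "R = 2 * P * W / (t - P)"
  define S where "S = W * R / t"
  have l6: "[0..<6] = [0::nat,1,2,3,4,5]" by (simp add: upt_rec)
  have "detL [0::nat,1,2,3,4,5] (\<lambda>i j. [[t-P,0,0,0,0,-W],[0,t-P,0,0,0,-W],[-P,-P,t,0,0,0],
     [0,0,-W,t-Q,0,0],[0,0,-W,0,t-Q,0],[0,0,0,-Q,-Q,t]] ! i ! j) =
     (t-P) * detL [1,2,3,4,5] (\<lambda>i j. [[0,0,0,0,0,0],[0,t-P,0,0,0,-W],[0,-P,t,0,0,-P*W/(t-P)],
     [0,0,-W,t-Q,0,0],[0,0,-W,0,t-Q,0],[0,0,0,-Q,-Q,t]] ! i ! j)"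
    by (rule pivot_step, simp, insert tp t tq, simp, auto simp: field_simps)
  also have "detL [1,2,3,4,5] (\<lambda>i j. [[0,0,0,0,0,0],[0,t-P,0,0,0,-W],[0,-P,t,0,0,-P*W/(t-P)],
     [0,0,-W,t-Q,0,0],[0,0,-W,0,t-Q,0],[0,0,0,-Q,-Q,t]] ! i ! j) =
     (t-P) * detL [2,3,4,5] (\<lambda>i j. [[0,0,0,0,0,0],[0,0,0,0,0,0],[0,0,t,0,0,-R],
     [0,0,-W,t-Q,0,0],[0,0,-W,0,t-Q,0],[0,0,0,-Q,-Q,t]] ! i ! j)"
    by (rule pivot_step, simp, insert tp t tq, simp, auto simp: field_simps R_def)
  also have "detL [2,3,4,5] (\<lambda>i j. [[0,0,0,0,0,0],[0,0,0,0,0,0],[0,0,t,0,0,-R],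
     [0,0,-W,t-Q,0,0],[0,0,-W,0,t-Q,0],[0,0,0,-Q,-Q,t]] ! i ! j) =
     t * detL [3,4,5] (\<lambda>i j. [[0,0,0,0,0,0],[0,0,0,0,0,0],[0,0,0,0,0,0],
     [0,0,0,t-Q,0,-S],[0,0,0,0,t-Q,-S],[0,0,0,-Q,-Q,t]] ! i ! j)"
    by (rule pivot_step, simp, insert tp t tq, simp, auto simp: field_simps S_def)
  also have "detL [3,4,5] (\<lambda>i j. [[0,0,0,0,0,0],[0,0,0,0,0,0],[0,0,0,0,0,0],
     [0,0,0,t-Q,0,-S],[0,0,0,0,t-Q,-S],[0,0,0,-Q,-Q,t]] ! i ! j) =
     (t-Q) * detL [4,5] (\<lambda>i j. [[0,0,0,0,0,0],[0,0,0,0,0,0],[0,0,0,0,0,0],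
     [0,0,0,0,0,0],[0,0,0,0,t-Q,-S],[0,0,0,0,-Q,t - Q*S/(t-Q)]] ! i ! j)"
    by (rule pivot_step, simp, insert tp t tq, simp, auto simp: field_simps)
  also have "detL [4,5] (\<lambda>i j. [[0,0,0,0,0,0],[0,0,0,0,0,0],[0,0,0,0,0,0],
     [0,0,0,0,0,0],[0,0,0,0,t-Q,-S],[0,0,0,0,-Q,t - Q*S/(t-Q)]] ! i ! j) =
     (t-Q) * detL [5] (\<lambda>i j. [[0,0,0,0,0,0],[0,0,0,0,0,0],[0,0,0,0,0,0],
     [0,0,0,0,0,0],[0,0,0,0,0,0],[0,0,0,0,0,t - Q*S/(t-Q) - Q*S/(t-Q)]] ! i ! j)"
    by (rule pivot_step, simp, insert tp t tq, simp, auto simp: field_simps)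
  also have "detL [5::nat] (\<lambda>i j. [[0,0,0,0,0,0],[0,0,0,0,0,0],[0,0,0,0,0,0],
     [0,0,0,0,0,0],[0,0,0,0,0,0],[0,0,0,0,0,t - Q*S/(t-Q) - Q*S/(t-Q)]] ! i ! j) = t - Q*S/(t-Q) - Q*S/(t-Q)"
    by (simp add: detL_single)
  finally have X: "detL [0::nat,1,2,3,4,5] (\<lambda>i j. [[t-P,0,0,0,0,-W],[0,t-P,0,0,0,-W],[-P,-P,t,0,0,0],
     [0,0,-W,t-Q,0,0],[0,0,-W,0,t-Q,0],[0,0,0,-Q,-Q,t]] ! i ! j) =
     (t-P) * ((t-P) * (t * ((t-Q) * ((t-Q) * (t - Q*S/(t-Q) - Q*S/(t-Q))))))" .
  have "(t-P) * ((t-P) * (t * ((t-Q) * ((t-Q) * (t - Q*S/(t-Q) - Q*S/(t-Q)))))) =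
     (t-P)^2 * (t-Q)^2 * t^2 - 4 * P * Q * W^2 * (t-P) * (t-Q)"
  proof -
    have gen: "\<And>d y. d \<noteq> 0 \<Longrightarrow> d * (t - y/d - y/d) = d*t - 2*y" by (simp add: right_diff_distrib)
    have e1: "(t-Q) * (t - Q*S/(t-Q) - Q*S/(t-Q)) = (t-Q)*t - 2*Q*S" using gen[OF tq] by simp
    have e2: "(t-P) * (t * S) = 2*P*W^2" using t tp by (simp add: S_def R_def field_simps power2_eq_square)
    have "(t-P) * ((t-P) * (t * ((t-Q) * ((t-Q) * (t - Q*S/(t-Q) - Q*S/(t-Q)))))) =
       (t-P) * ((t-P) * (t * ((t-Q) * ((t-Q)*t - 2*Q*S))))" by (simp only: e1)
    also have "\<dots> = (t-P)^2*(t-Q)^2*t^2 - 2*Q*(t-P)*(t-Q)*((t-P)*(t*S))"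
      by (simp add: algebra_simps power2_eq_square)
    also have "\<dots> = (t-P)^2 * (t-Q)^2 * t^2 - 4 * P * Q * W^2 * (t-P) * (t-Q)"
      by (simp add: e2)
    finally show ?thesis .
  qed
  with X show ?thesis unfolding l6 by simp
qed

context cbl begin

abbreviation "AR \<equiv> arcs V E"

lemma arc_iff: "x \<in> AR \<longleftrightarrow> fst x < c + b \<and> snd x \<in> nbrset (fst x)"
proof -
  obtain u w where x: "x = (u,w)" by (cases x)
  have "x \<in> AR \<longleftrightarrow> u < c + b \<and> w < c + b \<and> adj E u w" unfolding x arcs_def V_iff by simp
  also have "\<dots> \<longleftrightarrow> u < c + b \<and> w \<in> nbrset u" using adj_nbr nbr_adj by blast
  finally show ?thesis by (simp add: x)
qed

lemma arc_sym: "x \<in> AR \<Longrightarrow> (snd x, fst x) \<in> AR"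
  unfolding arcs_def adj_def by (auto simp: insert_commute)

lemma arc_ne: "x \<in> AR \<Longrightarrow> fst x \<noteq> snd x"
  unfolding arcs_def adj_def by auto

lemma deg_eq: "u < c + b \<Longrightarrow> graph_deg V E u = card (nbrset u)"
proof -
  assume u: "u < c + b"
  have "{w \<in> V. adj E u w} = nbrset u" using adj_nbr[OF _ u] nbr_adj[OF _ u] V_iff by blast
  thus ?thesis unfolding graph_deg_def by simp
qed

lemma ns0: "nbrset 0 = {1, a - 1, a}" by (simp add: nbrset_def)
lemma nsA: "0 < u \<Longrightarrow> u < a \<Longrightarrow> nbrset u = {u - 1, if u = a - 1 then 0 else u + 1}" by (simp add: nbrset_def)
lemma nsP: "a \<le> u \<Longrightarrow> u < c \<Longrightarrow> nbrset u = {if u = a then 0 else u - 1, u + 1}"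
  using a3 by (simp add: nbrset_def)
lemma nsC: "nbrset c = {if k = 2 then 0 else c - 1, c + 1, c + b - 1}"
  using a3 c_ge by (simp add: nbrset_def)
lemma nsB: "c < u \<Longrightarrow> nbrset u = {u - 1, if u = c + b - 1 then c else u + 1}"
  using a3 c_ge by (simp add: nbrset_def)

lemma card_ns: assumes "u < c + b" shows "card (nbrset u) = (if u = 0 \<or> u = c then 3 else 2)"
proof -
  consider "u = 0" | "0 < u" "u < a" | "a \<le> u" "u < c" | "u = c" | "c < u" by linarith
  thus ?thesis
  proof cases
    case 1 thus ?thesis using a3 c_ge by (simp add: ns0)
  next
    case 2 thus ?thesis using a3 c_ge by (simp add: nsA)
  next
    case 3 thus ?thesis using a3 c_ge by (simp add: nsP)
  next
    case 4
    have f1: "c - 1 \<noteq> c + 1" "c - 1 \<noteq> c + b - 1" "c + 1 \<noteq> c + b - 1" "0 \<noteq> c + 1" "0 \<noteq> c + b - 1"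
      using a3 b3 c_ge by arith+
    have "card (nbrset c) = 3" unfolding nsC using f1 by (cases "k = 2") auto
    thus ?thesis using 4 by simp
  next
    case 5 thus ?thesis using a3 b3 c_ge assms by (simp add: nsB)
  qed
qed

definition M0 :: "real \<Rightarrow> nat \<times> nat \<Rightarrow> nat \<times> nat \<Rightarrow> real" where
  "M0 t r s = (if r = s then t else 0) -
     (if fst s = snd r \<and> snd s \<noteq> fst r then 1 / (real (graph_deg V E (snd r)) - 1) else 0)"

lemma step:
  assumes x: "x \<in> AR" and xy: "snd x = fst y" and ne: "fst x \<noteq> snd y"
    and ns: "nbrset (snd x) = {fst x, snd y}"
  shows "y \<in> AR"
    and "\<And>s. s \<in> AR \<Longrightarrow> M0 t x s = (if s = x then t else if s = y then -1 else 0)"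
    and "\<And>r. r \<in> AR \<Longrightarrow> r \<noteq> x \<Longrightarrow> r \<noteq> y \<Longrightarrow> M0 t r y = 0"
proof -
  have xb: "snd x < c + b" using x arc_sym[OF x] arc_iff by auto
  show y: "y \<in> AR" using arc_iff xb xy ns by auto
  have deg: "graph_deg V E (snd x) = 2" using deg_eq[OF xb] ns ne by simp
  have xne: "fst x \<noteq> snd x" using arc_ne[OF x] .
  have yx: "y \<noteq> x" using xy xne by auto
  fix s assume s: "s \<in> AR"
  have succ: "(fst s = snd x \<and> snd s \<noteq> fst x) \<longleftrightarrow> s = y"
  proof
    assume h: "fst s = snd x \<and> snd s \<noteq> fst x"
    hence "snd s \<in> nbrset (snd x)" using s arc_iff by auto
    hence "snd s = snd y" using h ns by auto
    thus "s = y" using h xy by (simp add: prod_eq_iff)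
  next
    assume "s = y" thus "fst s = snd x \<and> snd s \<noteq> fst x" using xy ne by auto
  qed
  show "M0 t x s = (if s = x then t else if s = y then -1 else 0)"
    unfolding M0_def using succ deg yx xne by auto
next
  fix r assume r: "r \<in> AR" "r \<noteq> x" "r \<noteq> y"
  have "\<not> (fst y = snd r \<and> snd y \<noteq> fst r)"
  proof
    assume h: "fst y = snd r \<and> snd y \<noteq> fst r"
    have "fst r \<in> nbrset (snd r)" using arc_sym[OF r(1)] arc_iff by auto
    hence "fst r = fst x" using h ns xy by auto
    hence "r = x" using h xy by (simp add: prod_eq_iff)
    thus False using r by simp
  qed
  thus "M0 t r y = 0" unfolding M0_def using r by auto
qed

end

context cbl begin

definition "fA1 i = (i, if i = a - 1 then 0 else i + 1)"
definition "fA2 j = (if j = 0 then 0 else a - j, a - 1 - j)"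
definition "fB1 j = (c + j, if j = b - 1 then c else c + j + 1)"
definition "fB2 j = (if j = 0 then c else c + b - j, c + b - 1 - j)"
definition "fP l = (if l = 0 then 0 else a + l - 1, a + l)"
definition "fQ j = (c - j, if j = k - 2 then 0 else c - j - 1)"

definition "stepok f m \<longleftrightarrow> (\<forall>l < m. snd (f l) = fst (f (Suc l)) \<and> fst (f l) \<noteq> snd (f (Suc l)) \<and>
    nbrset (snd (f l)) = {fst (f l), snd (f (Suc l))})"

lemma chain_arcs: assumes f0: "f 0 \<in> AR" and st: "stepok f m" shows "l \<le> m \<Longrightarrow> f l \<in> AR"
proof (induction l)
  case 0 thus ?case using f0 by simp
next
  case (Suc l)
  hence "f l \<in> AR" "l < m" by auto
  thus ?case using step(1)[of "f l" "f (Suc l)"] st unfolding stepok_def by blast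
qed

lemma c_eq: "c = a + k - 2" by (simp add: c_def)

lemma okA1: "stepok fA1 (a - 1)"
  unfolding stepok_def
proof (intro allI impI)
  fix l assume l: "l < a - 1"
  have "nbrset (l + 1) = {l, if l + 1 = a - 1 then 0 else l + 2}" using nsA[of "l+1"] l by simp
  thus "snd (fA1 l) = fst (fA1 (Suc l)) \<and> fst (fA1 l) \<noteq> snd (fA1 (Suc l)) \<and>
    nbrset (snd (fA1 l)) = {fst (fA1 l), snd (fA1 (Suc l))}"
    using l a3 by (auto simp: fA1_def)
qed

lemma okA2: "stepok fA2 (a - 1)"
  unfolding stepok_def
proof (intro allI impI)
  fix l assume l: "l < a - 1"
  have "nbrset (a - 1 - l) = {a - 2 - l, if l = 0 then 0 else a - l}" using nsA[of "a - 1 - l"] l a3 by auto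
  thus "snd (fA2 l) = fst (fA2 (Suc l)) \<and> fst (fA2 l) \<noteq> snd (fA2 (Suc l)) \<and>
    nbrset (snd (fA2 l)) = {fst (fA2 l), snd (fA2 (Suc l))}"
    using l a3 by (auto simp: fA2_def)
qed

lemma okB1: "stepok fB1 (b - 1)"
  unfolding stepok_def
proof (intro allI impI)
  fix l assume l: "l < b - 1"
  have "nbrset (c + l + 1) = {c + l, if l + 1 = b - 1 then c else c + l + 2}" using nsB[of "c + l + 1"] l by auto
  thus "snd (fB1 l) = fst (fB1 (Suc l)) \<and> fst (fB1 l) \<noteq> snd (fB1 (Suc l)) \<and>
    nbrset (snd (fB1 l)) = {fst (fB1 l), snd (fB1 (Suc l))}"
    using l b3 by (auto simp: fB1_def)
qed

lemma okB2: "stepok fB2 (b - 1)"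
  unfolding stepok_def
proof (intro allI impI)
  fix l assume l: "l < b - 1"
  have "nbrset (c + b - 1 - l) = {c + b - 2 - l, if l = 0 then c else c + b - l}" using nsB[of "c + b - 1 - l"] l b3 by auto
  thus "snd (fB2 l) = fst (fB2 (Suc l)) \<and> fst (fB2 l) \<noteq> snd (fB2 (Suc l)) \<and>
    nbrset (snd (fB2 l)) = {fst (fB2 l), snd (fB2 (Suc l))}"
    using l b3 by (auto simp: fB2_def)
qed

lemma okP: "stepok fP (k - 2)"
  unfolding stepok_def
proof (intro allI impI)
  fix l assume l: "l < k - 2"
  have "nbrset (a + l) = {if l = 0 then 0 else a + l - 1, a + l + 1}" using nsP[of "a + l"] l by (auto simp: c_eq)
  thus "snd (fP l) = fst (fP (Suc l)) \<and> fst (fP l) \<noteq> snd (fP (Suc l)) \<and>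
    nbrset (snd (fP l)) = {fst (fP l), snd (fP (Suc l))}"
    using l a3 by (auto simp: fP_def)
qed

lemma okQ: "stepok fQ (k - 2)"
  unfolding stepok_def
proof (intro allI impI)
  fix l assume l: "l < k - 2"
  have "nbrset (c - l - 1) = {if l + 1 = k - 2 then 0 else c - l - 2, c - l}" using nsP[of "c - l - 1"] l by (auto simp: c_eq)
  thus "snd (fQ l) = fst (fQ (Suc l)) \<and> fst (fQ l) \<noteq> snd (fQ (Suc l)) \<and>
    nbrset (snd (fQ l)) = {fst (fQ l), snd (fQ (Suc l))}"
    using l a3 by (auto simp: fQ_def c_eq)
qed

lemma heads: "fA1 0 \<in> AR" "fA2 0 \<in> AR" "fB1 0 \<in> AR" "fB2 0 \<in> AR" "fP 0 \<in> AR" "fQ 0 \<in> AR"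
  using a3 b3 k2 c_ge by (auto simp: arc_iff fA1_def fA2_def fB1_def fB2_def fP_def fQ_def ns0 nsC)


definition "cs = [(fA1, a - 1), (fA2, a - 1), (fB1, b - 1), (fB2, b - 1), (fP, k - 2), (fQ, k - 2)]"
definition "K = [(a - 1, 0), (1, 0), (a, 0), (c + b - 1, c), (c + 1, c), (if k = 2 then 0 else c - 1, c)]"
definition "L = chl cs @ K"

lemma cs_cases: assumes "(f, m) \<in> set cs"
  shows "f 0 \<in> AR \<and> stepok f m \<and> f m \<in> set K"
proof -
  have y: "fA1 (a - 1) \<in> set K" "fA2 (a - 1) \<in> set K" "fB1 (b - 1) \<in> set K" "fB2 (b - 1) \<in> set K"
      "fP (k - 2) \<in> set K" "fQ (k - 2) \<in> set K"
    using a3 b3 k2 by (auto simp: K_def fA1_def fA2_def fB1_def fB2_def fP_def fQ_def c_eq)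
  show ?thesis using assms heads y okA1 okA2 okB1 okB2 okP okQ by (auto simp: cs_def)
qed

lemma cs_arcs: "(f, m) \<in> set cs \<Longrightarrow> l \<le> m \<Longrightarrow> f l \<in> AR"
  using cs_cases chain_arcs by blast

lemma memL: "(f, m) \<in> set cs \<Longrightarrow> l < m \<Longrightarrow> f l \<in> set L"
  unfolding L_def using mem_chl by fastforce

lemma K_sub: "set K \<subseteq> set L" unfolding L_def by auto

lemma K_alt: "K = [fA1 (a - 1), fA2 (a - 1), fQ (k - 2), fB1 (b - 1), fB2 (b - 1), fP (k - 2)]"
  using a3 b3 k2 by (simp add: K_def fA1_def fA2_def fB1_def fB2_def fP_def fQ_def c_eq; arith)

lemma K_arcs: "set K \<subseteq> AR"
proof -
  have "(fA1, a - 1) \<in> set cs" "(fA2, a - 1) \<in> set cs" "(fB1, b - 1) \<in> set cs" "(fB2, b - 1) \<in> set cs"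
    "(fP, k - 2) \<in> set cs" "(fQ, k - 2) \<in> set cs" by (auto simp: cs_def)
  hence "fA1 (a - 1) \<in> AR" "fA2 (a - 1) \<in> AR" "fB1 (b - 1) \<in> AR" "fB2 (b - 1) \<in> AR"
    "fP (k - 2) \<in> AR" "fQ (k - 2) \<in> AR" using cs_arcs by blast+
  thus ?thesis unfolding K_alt by simp
qed

lemma L_arcs: "set L \<subseteq> AR"
proof
  fix x assume "x \<in> set L"
  hence "x \<in> set (chl cs) \<or> x \<in> set K" by (auto simp: L_def)
  thus "x \<in> AR"
  proof
    assume "x \<in> set (chl cs)"
    then obtain f m l where "(f, m) \<in> set cs" "l < m" "x = f l"
      unfolding chl_def by auto
    thus ?thesis using cs_arcs[of f m l] by simp
  next
    assume "x \<in> set K" thus ?thesis using K_arcs by auto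
  qed
qed

end

context cbl begin

lemma csm: "(fA1, a - 1) \<in> set cs" "(fA2, a - 1) \<in> set cs" "(fB1, b - 1) \<in> set cs" "(fB2, b - 1) \<in> set cs"
    "(fP, k - 2) \<in> set cs" "(fQ, k - 2) \<in> set cs" by (auto simp: cs_def)

lemma Kin: "(a - 1, 0) \<in> set L" "(1, 0) \<in> set L" "(a, 0) \<in> set L" "(c + b - 1, c) \<in> set L"
  "(c + 1, c) \<in> set L" "(if k = 2 then 0 else c - 1, c) \<in> set L"
  using K_sub by (auto simp: K_def)

lemma arcs_sub: "AR \<subseteq> set L"
proof
  fix x assume x: "x \<in> AR"
  obtain u w where xw: "x = (u, w)" by (cases x)
  have u: "u < c + b" and w: "w \<in> nbrset u" using x arc_iff xw by auto
  consider "u = 0" | "0 < u" "u < a" | "a \<le> u" "u < c" | "u = c" | "c < u" by linarith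
  hence "(u, w) \<in> set L"
  proof cases
    case 1
    hence "w = 1 \<or> w = a - 1 \<or> w = a" using w ns0 by auto
    moreover have "(0, 1) \<in> set L" using memL[OF csm(1), of 0] a3 by (simp add: fA1_def)
    moreover have "(0, a - 1) \<in> set L" using memL[OF csm(2), of 0] a3 by (simp add: fA2_def)
    moreover have "(0, a) \<in> set L"
    proof (cases "k = 2")
      case True
      have ca: "c = a" using True c_eq by arith
      show ?thesis using Kin(6) unfolding if_P[OF True] ca .
    next
      case False thus ?thesis using memL[OF csm(5), of 0] k2 by (simp add: fP_def)
    qed
    ultimately show ?thesis using 1 by auto
  next
    case 2
    hence w': "w = u - 1 \<or> w = (if u = a - 1 then 0 else u + 1)" using w nsA by auto
    have m1: "(u, u - 1) \<in> set L"
    proof (cases "u = 1")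
      case True thus ?thesis using Kin(2) by simp
    next
      case False
      have "fA2 (a - u) = (u, u - 1)" using 2 False by (simp add: fA2_def)
      thus ?thesis using memL[OF csm(2), of "a - u"] 2 False by simp
    qed
    have m2: "(u, if u = a - 1 then 0 else u + 1) \<in> set L"
    proof (cases "u = a - 1")
      case True thus ?thesis using Kin(1) by simp
    next
      case False
      have "fA1 u = (u, u + 1)" using False by (simp add: fA1_def)
      thus ?thesis using memL[OF csm(1), of u] 2 False by simp
    qed
    show ?thesis using w' m1 m2 by auto
  next
    case 3
    hence w': "w = (if u = a then 0 else u - 1) \<or> w = u + 1" using w nsP by auto
    have m1: "(u, if u = a then 0 else u - 1) \<in> set L"
    proof (cases "u = a")
      case True thus ?thesis using Kin(3) by simp
    next
      case False
      have j: "c - u < k - 2" "c - u \<noteq> k - 2" using 3 False by (auto simp: c_eq)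
      have "fQ (c - u) = (u, u - 1)" using 3 j by (simp add: fQ_def)
      thus ?thesis using memL[OF csm(6), of "c - u"] j False by simp
    qed
    have m2: "(u, u + 1) \<in> set L"
    proof (cases "u + 1 = c")
      case True
      have "k \<noteq> 2" using 3 by (auto simp: c_eq)
      moreover have "u = c - 1" "u + 1 = c" using True by auto
      ultimately show ?thesis using Kin(6) by simp
    next
      case False
      have j: "u + 1 - a < k - 2" "u + 1 - a \<noteq> 0" using 3 False by (auto simp: c_eq)
      have "fP (u + 1 - a) = (u, u + 1)" using 3 j by (simp add: fP_def)
      thus ?thesis using memL[OF csm(5), of "u + 1 - a"] j by simp
    qed
    show ?thesis using w' m1 m2 by auto
  next
    case 4
    hence w': "w = (if k = 2 then 0 else c - 1) \<or> w = c + 1 \<or> w = c + b - 1" using w nsC by auto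
    have m1: "(c, c + 1) \<in> set L" using memL[OF csm(3), of 0] b3 by (simp add: fB1_def)
    have m2: "(c, c + b - 1) \<in> set L" using memL[OF csm(4), of 0] b3 by (simp add: fB2_def)
    have m3: "(c, if k = 2 then 0 else c - 1) \<in> set L"
    proof (cases "k = 2")
      case True
      have ca: "c = a" using True c_eq by arith
      show ?thesis using Kin(3) unfolding if_P[OF True] ca .
    next
      case False thus ?thesis using memL[OF csm(6), of 0] k2 by (simp add: fQ_def)
    qed
    show ?thesis using w' m1 m2 m3 4 by auto
  next
    case 5
    hence w': "w = u - 1 \<or> w = (if u = c + b - 1 then c else u + 1)" using w nsB by auto
    have m1: "(u, u - 1) \<in> set L"
    proof (cases "u = c + 1")
      case True thus ?thesis using Kin(5) by simp
    next
      case False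
      have j: "c + b - u < b - 1" "c + b - u \<noteq> 0" using 5 u False by auto
      have "fB2 (c + b - u) = (u, u - 1)" using 5 u j by (simp add: fB2_def)
      thus ?thesis using memL[OF csm(4), of "c + b - u"] j by simp
    qed
    have m2: "(u, if u = c + b - 1 then c else u + 1) \<in> set L"
    proof (cases "u = c + b - 1")
      case True thus ?thesis using Kin(4) by simp
    next
      case False
      have j: "u - c < b - 1" "u - c \<noteq> b - 1" using 5 u False by auto
      have "fB1 (u - c) = (u, u + 1)" using 5 j by (simp add: fB1_def)
      thus ?thesis using memL[OF csm(3), of "u - c"] j False by simp
    qed
    show ?thesis using w' m1 m2 by auto
  qed
  thus "x \<in> set L" using xw by simp
qed

end

context cbl begin

lemma setL: "set L = AR" using arcs_sub L_arcs by blast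

lemma fin_ns: "finite (nbrset u)" by (simp add: nbrset_def)

lemma AR_sigma: "AR = Sigma {..<c + b} nbrset"
  using arc_iff by auto

lemma card_AR: "card AR = 2 * (c + b) + 2"
proof -
  have c0: "c \<noteq> 0" using c_ge a3 by simp
  have "card AR = (\<Sum>u<c + b. card (nbrset u))"
    unfolding AR_sigma by (rule card_SigmaI, auto simp: fin_ns)
  also have "\<dots> = (\<Sum>u<c + b. 2 + ((if u = 0 then 1 else 0) + (if u = c then 1 else 0)))"
    by (rule sum.cong, auto simp: card_ns c0)
  also have "\<dots> = (\<Sum>u<c + b. 2) + ((\<Sum>u<c + b. if u = 0 then 1 else 0) + (\<Sum>u<c + b. if u = c then 1 else 0))"
    by (simp only: sum.distrib)
  also have "\<dots> = 2 * (c + b) + 2" using c0 b3 by simp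
  finally show ?thesis .
qed

lemma len_chl: "length (chl xs) = sum_list (map snd xs)"
  by (induction xs) (auto simp: chl_def)

lemma len_L: "length L = 2 * (c + b) + 2"
  using a3 b3 k2 by (simp add: L_def len_chl cs_def K_def c_eq)

lemma distL: "distinct L"
  by (rule card_distinct, simp add: setL card_AR len_L)

lemma main_red:
  assumes t: "t \<noteq> 0"
  shows "detL L (M0 t) = t^(sum_list (map snd cs)) * detL K (\<lambda>r s. M0 t r s + corr t cs (M0 t) r s)"
  unfolding L_def
proof (rule multi_chain[OF t])
  show "distinct (chl cs @ K)" using distL by (simp add: L_def)
  show "\<And>f m. (f, m) \<in> set cs \<Longrightarrow> f m \<in> set K" using cs_cases by blast
next
  fix f m l s assume fm: "(f, m) \<in> set cs" and l: "l < m" and s: "s \<in> set (chl cs @ K)"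
  have sA: "s \<in> AR" using s setL unfolding L_def by blast
  have st: "stepok f m" using cs_cases[OF fm] by blast
  have x: "f l \<in> AR" using cs_arcs[OF fm] l by simp
  show "M0 t (f l) s = (if s = f l then t else if s = f (Suc l) then - 1 else 0)"
    using step(2)[OF x _ _ _ sA] st l unfolding stepok_def by blast
next
  fix f m l r assume fm: "(f, m) \<in> set cs" and l: "0 < l" "l < m" and r: "r \<in> set (chl cs @ K)"
    and r1: "r \<noteq> f (l - 1)" and r2: "r \<noteq> f l"
  have rA: "r \<in> AR" using r setL unfolding L_def by blast
  have st: "stepok f m" using cs_cases[OF fm] by blast
  have x: "f (l - 1) \<in> AR" using cs_arcs[OF fm] l by simp
  have sl: "Suc (l - 1) = l" using l by simp
  have h: "snd (f (l - 1)) = fst (f l) \<and> fst (f (l - 1)) \<noteq> snd (f l) \<and>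
    nbrset (snd (f (l - 1))) = {fst (f (l - 1)), snd (f l)}"
    using st l unfolding stepok_def by (metis sl less_imp_diff_less)
  show "M0 t r (f l) = 0" using step(3)[OF x _ _ _ rA r1 r2] h by blast
qed

end

context cbl begin

lemma deg3: "graph_deg V E 0 = 3" "graph_deg V E c = 3"
  using deg_eq card_ns c_ge a3 b3 by auto

lemma M0K: "snd r = 0 \<or> snd r = c \<Longrightarrow>
   M0 t r s = (if r = s then t else 0) - (if fst s = snd r \<and> snd s \<noteq> fst r then 1/2 else 0)"
  unfolding M0_def using deg3 by auto

lemma distK: "distinct K" using distL by (simp add: L_def)

lemma Knth: "i < 6 \<Longrightarrow> j < 6 \<Longrightarrow> K ! i = K ! j \<longleftrightarrow> i = j"
  using distK by (simp add: nth_eq_iff_index_eq K_def)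

lemma corr_eq: "corr t cs M r s =
   (if s = K!0 then M r (fA1 0) / t^(a-1) else 0) + (if s = K!1 then M r (fA2 0) / t^(a-1) else 0) +
   (if s = K!3 then M r (fB1 0) / t^(b-1) else 0) + (if s = K!4 then M r (fB2 0) / t^(b-1) else 0) +
   (if 0 < k - 2 \<and> s = K!5 then M r (fP 0) / t^(k-2) else 0) + (if 0 < k - 2 \<and> s = K!2 then M r (fQ 0) / t^(k-2) else 0)"
  using a3 b3 by (simp add: cs_def K_alt)


lemma heads_eq: "fA1 0 = (0, 1)" "fA2 0 = (0, a - 1)" "fB1 0 = (c, c + 1)" "fB2 0 = (c, c + b - 1)"
  "fP 0 = (0, a)" "fQ 0 = (c, if k = 2 then 0 else c - 1)"
  using a3 b3 k2 by (auto simp: fA1_def fA2_def fB1_def fB2_def fP_def fQ_def)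

lemma six: "i < (6::nat) \<Longrightarrow> i = 0 \<or> i = 1 \<or> i = 2 \<or> i = 3 \<or> i = 4 \<or> i = 5" by auto

definition "Tab t = (let P = (1/2) / t^(a-1); Q = (1/2) / t^(b-1); W = (1/2) / t^(k-2) in
  [[t-P,0,0,0,0,-W],[0,t-P,0,0,0,-W],[-P,-P,t,0,0,0],[0,0,-W,t-Q,0,0],[0,0,-W,0,t-Q,0],[0,0,0,-Q,-Q,(t::real)]])"

lemma tab_k2: assumes k: "k = 2" and i: "i < 6" and j: "j < 6"
  shows "M0 t (K!i) (K!j) + corr t cs (M0 t) (K!i) (K!j) = Tab t ! i ! j"
proof -
  have ca: "c = a" using k c_eq by simp
  have Ke: "K = [(a - 1, 0), (1, 0), (a, 0), (a + b - 1, a), (a + 1, a), (0, a)]"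
    unfolding K_def ca using k by simp
  have sndK: "snd (K!i) = 0 \<or> snd (K!i) = c" using i by (auto simp: K_def dest!: six)
  have ce: "corr t cs (M0 t) (K!i) (K!j) =
   (if j = 0 then M0 t (K!i) (0, 1) / t^(a-1) else 0) + (if j = 1 then M0 t (K!i) (0, a - 1) / t^(a-1) else 0) +
   (if j = 3 then M0 t (K!i) (a, a + 1) / t^(b-1) else 0) + (if j = 4 then M0 t (K!i) (a, a + b - 1) / t^(b-1) else 0)"
    unfolding corr_eq heads_eq using Knth[OF j] k ca by simp
  obtain a' where a: "a = a' + 3" using a3 by (metis add.commute le_Suc_ex)
  obtain b' where b: "b = b' + 3" using b3 by (metis add.commute le_Suc_ex)
  have "M0 t (K!i) (K!j) + corr t cs (M0 t) (K!i) (K!j) = (if K!i = K!j then t else 0) - (if fst (K!j) = snd (K!i) \<and> snd (K!j) \<noteq> fst (K!i) then 1/2 else 0) +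
   ((if j = 0 then ((if K!i = (0,1) then t else 0) - (if 0 = snd (K!i) \<and> 1 \<noteq> fst (K!i) then 1/2 else 0)) / t^(a-1) else 0) +
   (if j = 1 then ((if K!i = (0,a-1) then t else 0) - (if 0 = snd (K!i) \<and> a-1 \<noteq> fst (K!i) then 1/2 else 0)) / t^(a-1) else 0) +
   (if j = 3 then ((if K!i = (a,a+1) then t else 0) - (if a = snd (K!i) \<and> a+1 \<noteq> fst (K!i) then 1/2 else 0)) / t^(b-1) else 0) +
   (if j = 4 then ((if K!i = (a,a+b-1) then t else 0) - (if a = snd (K!i) \<and> a+b-1 \<noteq> fst (K!i) then 1/2 else 0)) / t^(b-1) else 0))"
    unfolding ce M0K[OF sndK] ca by simp
  also have "\<dots> = Tab t ! i ! j"
    unfolding Tab_def Ke using i j k unfolding a b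
    by (elim six[elim_format] disjE; simp add: Let_def)
  finally show ?thesis .
qed


lemma tab_k3: assumes k: "k \<noteq> 2" and i: "i < 6" and j: "j < 6"
  shows "M0 t (K!i) (K!j) + corr t cs (M0 t) (K!i) (K!j) = Tab t ! i ! j"
proof -
  obtain a' where a: "a = a' + 3" using a3 by (metis add.commute le_Suc_ex)
  obtain b' where b: "b = b' + 3" using b3 by (metis add.commute le_Suc_ex)
  obtain k' where k': "k = k' + 3" using k2 k by (metis add.commute le_Suc_ex le_neq_implies_less Suc_leI numeral_2_eq_2 numeral_3_eq_3)
  have cc: "c = a' + k' + 4" using c_eq a k' by simp
  have Ke: "K = [(a - 1, 0), (1, 0), (a, 0), (c + b - 1, c), (c + 1, c), (c - 1, c)]"
    unfolding K_def using k by simp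
  have sndK: "snd (K!i) = 0 \<or> snd (K!i) = c" using i by (auto simp: K_def dest!: six)
  have k0: "0 < k - 2" using k k2 by simp
  have ce: "corr t cs (M0 t) (K!i) (K!j) =
   (if j = 0 then M0 t (K!i) (0, 1) / t^(a-1) else 0) + (if j = 1 then M0 t (K!i) (0, a - 1) / t^(a-1) else 0) +
   (if j = 3 then M0 t (K!i) (c, c + 1) / t^(b-1) else 0) + (if j = 4 then M0 t (K!i) (c, c + b - 1) / t^(b-1) else 0) +
   (if j = 5 then M0 t (K!i) (0, a) / t^(k-2) else 0) + (if j = 2 then M0 t (K!i) (c, c - 1) / t^(k-2) else 0)"
    unfolding corr_eq heads_eq using Knth[OF j] k k0 by simp
  have "M0 t (K!i) (K!j) + corr t cs (M0 t) (K!i) (K!j) = (if K!i = K!j then t else 0) - (if fst (K!j) = snd (K!i) \<and> snd (K!j) \<noteq> fst (K!i) then 1/2 else 0) +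
   ((if j = 0 then ((if K!i = (0,1) then t else 0) - (if 0 = snd (K!i) \<and> 1 \<noteq> fst (K!i) then 1/2 else 0)) / t^(a-1) else 0) +
   (if j = 1 then ((if K!i = (0,a-1) then t else 0) - (if 0 = snd (K!i) \<and> a-1 \<noteq> fst (K!i) then 1/2 else 0)) / t^(a-1) else 0) +
   (if j = 3 then ((if K!i = (c,c+1) then t else 0) - (if c = snd (K!i) \<and> c+1 \<noteq> fst (K!i) then 1/2 else 0)) / t^(b-1) else 0) +
   (if j = 4 then ((if K!i = (c,c+b-1) then t else 0) - (if c = snd (K!i) \<and> c+b-1 \<noteq> fst (K!i) then 1/2 else 0)) / t^(b-1) else 0) +
   (if j = 5 then ((if K!i = (0,a) then t else 0) - (if 0 = snd (K!i) \<and> a \<noteq> fst (K!i) then 1/2 else 0)) / t^(k-2) else 0) +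
   (if j = 2 then ((if K!i = (c,c-1) then t else 0) - (if c = snd (K!i) \<and> c-1 \<noteq> fst (K!i) then 1/2 else 0)) / t^(k-2) else 0))"
    unfolding ce M0K[OF sndK] by simp
  also have "\<dots> = Tab t ! i ! j"
    unfolding Tab_def Ke using i j unfolding cc unfolding a b k'
    by (elim six[elim_format] disjE; simp add: Let_def)
  finally show ?thesis .
qed

lemma tab: assumes i: "i < 6" and j: "j < 6"
  shows "M0 t (K!i) (K!j) + corr t cs (M0 t) (K!i) (K!j) = Tab t ! i ! j"
  using tab_k2[OF _ i j] tab_k3[OF _ i j] by blast

end

context cbl begin

lemma detK:
  fixes t :: real
  defines "P \<equiv> (1/2) / t^(a-1)" and "Q \<equiv> (1/2) / t^(b-1)" and "W \<equiv> (1/2) / t^(k-2)"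
  assumes t: "t \<noteq> 0" and tp: "t - P \<noteq> 0" and tq: "t - Q \<noteq> 0"
  shows "detL K (\<lambda>r s. M0 t r s + corr t cs (M0 t) r s) =
    (t-P)^2 * (t-Q)^2 * t^2 - 4 * P * Q * W^2 * (t-P) * (t-Q)"
proof -
  have lK: "length K = 6" by (simp add: K_def)
  have Km: "map (\<lambda>i. K ! i) [0..<6] = K" using map_nth[of K] lK by simp
  have "detL K (\<lambda>r s. M0 t r s + corr t cs (M0 t) r s) =
     detL [0..<6] (\<lambda>i j. M0 t (K!i) (K!j) + corr t cs (M0 t) (K!i) (K!j))"
    using detL_map[of "\<lambda>i. K ! i" "[0..<6]" "\<lambda>r s. M0 t r s + corr t cs (M0 t) r s"] unfolding Km .
  also have "\<dots> = detL [0..<6] (\<lambda>i j. Tab t ! i ! j)"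
    by (rule detL_cong) (simp add: tab)
  also have "\<dots> = (t-P)^2 * (t-Q)^2 * t^2 - 4 * P * Q * W^2 * (t-P) * (t-Q)"
    unfolding Tab_def Let_def P_def[symmetric] Q_def[symmetric] W_def[symmetric]
    by (rule det6[OF t tp tq])
  finally show ?thesis .
qed

lemma finAR: "finite AR" using setL[symmetric] by simp

lemma char_eval:
  fixes t :: real
  shows "poly (char_poly (P_nb V E)) t = detL L (M0 t)"
proof -
  define A where "A = arc_list V E"
  define n where "n = length A"
  have dA: "distinct A" and sA: "set A = AR" unfolding A_def arc_list_def using finAR by auto
  have Pn: "P_nb V E \<in> carrier_mat n n" unfolding P_nb_def A_def n_def by (simp add: Let_def)
  have "poly (char_poly (P_nb V E)) t = det (- char_matrix (P_nb V E) t)"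
    by (rule char_poly_matrix[OF Pn])
  also have "- char_matrix (P_nb V E) t = mat n n (\<lambda>(i,j). M0 t (A!i) (A!j))"
  proof (rule eq_matI)
    fix i j assume "i < dim_row (mat n n (\<lambda>(i,j). M0 t (A!i) (A!j)))" "j < dim_col (mat n n (\<lambda>(i,j). M0 t (A!i) (A!j)))"
    hence ij: "i < n" "j < n" by auto
    have eq: "A ! i = A ! j \<longleftrightarrow> i = j" using dA ij by (simp add: n_def nth_eq_iff_index_eq)
    obtain u v where uv: "A ! i = (u, v)" by (cases "A ! i")
    obtain x w where xw: "A ! j = (x, w)" by (cases "A ! j")
    show "(- char_matrix (P_nb V E) t) $$ (i, j) = mat n n (\<lambda>(i,j). M0 t (A!i) (A!j)) $$ (i, j)"
      using ij Pn eq uv xw unfolding char_matrix_def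
      by (simp add: P_nb_def Let_def A_def[symmetric] n_def[symmetric] M0_def)
  qed (insert Pn, auto simp: char_matrix_def)
  also have "det (mat n n (\<lambda>(i,j). M0 t (A!i) (A!j))) = detL A (M0 t)"
    unfolding detL_def n_def by simp
  also have "\<dots> = detL L (M0 t)"
    by (rule detL_perm[OF dA distL], simp add: sA setL)
  finally show ?thesis .
qed

end

lemma alg:
  fixes t A B C :: real
  assumes A: "A \<noteq> 0" and B: "B \<noteq> 0" and C: "C \<noteq> 0"
  shows "(A^2 * B^2 * C^2) * ((t - 1/2/A)^2 * (t - 1/2/B)^2 * t^2 - 4 * (1/2/A) * (1/2/B) * (1/2/C)^2 * (t - 1/2/A) * (t - 1/2/B))
   = 1/16 * ((2*(t*A) - 1) * (2*(t*B) - 1) * ((2*(t*A) - 1) * (2*(t*B) - 1) * (t^2 * C^2) - 1))"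
  using A B C by (simp add: field_simps power2_eq_square)

context cbl begin

lemma final_eval:
  fixes t :: real
  assumes t1: "t > 1"
  shows "poly (char_poly (P_nb V E)) t =
    1/16 * ((2 * t^a - 1) * (2 * t^b - 1) * ((2 * t^a - 1) * (2 * t^b - 1) * t^(2 * (k - 1)) - 1))"
proof -
  define A where "A = t^(a-1)"
  define B where "B = t^(b-1)"
  define C where "C = t^(k-2)"
  have t0: "t \<noteq> 0" using t1 by simp
  have A1: "A \<ge> 1" "B \<ge> 1" "C \<ge> 1" unfolding A_def B_def C_def using t1 by auto
  have tp: "t - (1/2) / t^(a-1) \<noteq> 0"
  proof -
    have "(1/2) / t^(a-1) \<le> 1/2" using A1(1) unfolding A_def by (simp add: field_simps)
    thus ?thesis using t1 by linarith
  qed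
  have tq: "t - (1/2) / t^(b-1) \<noteq> 0"
  proof -
    have "(1/2) / t^(b-1) \<le> 1/2" using A1(2) unfolding B_def by (simp add: field_simps)
    thus ?thesis using t1 by linarith
  qed
  have sm: "sum_list (map snd cs) = 2 * (a - 1) + 2 * (b - 1) + 2 * (k - 2)" by (simp add: cs_def)
  have ta: "t^a = t * A"
  proof -
    have "a = Suc (a - 1)" using a3 by simp
    hence "t^a = t^Suc (a - 1)" by (rule arg_cong)
    thus ?thesis unfolding A_def by simp
  qed
  have tb: "t^b = t * B"
  proof -
    have "b = Suc (b - 1)" using b3 by simp
    hence "t^b = t^Suc (b - 1)" by (rule arg_cong)
    thus ?thesis unfolding B_def by simp
  qed
  have tk: "t^(2 * (k - 1)) = t^2 * C^2"
  proof -
    have "2 * (k - 1) = 2 + 2 * (k - 2)" using k2 by simp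
    hence "t^(2 * (k - 1)) = t^2 * t^(2 * (k - 2))" by (simp only: power_add)
    also have "t^(2 * (k - 2)) = C^2" unfolding C_def by (simp add: power_mult[symmetric] mult.commute)
    finally show ?thesis .
  qed
  have te: "t ^ (2 * (a - 1) + 2 * (b - 1) + 2 * (k - 2)) = A^2 * B^2 * C^2"
    unfolding A_def B_def C_def by (simp add: power_add power_mult[symmetric] mult.commute)
  have "poly (char_poly (P_nb V E)) t = detL L (M0 t)" by (rule char_eval)
  also have "\<dots> = t ^ (2 * (a - 1) + 2 * (b - 1) + 2 * (k - 2)) *
      detL K (\<lambda>r s. M0 t r s + corr t cs (M0 t) r s)" using main_red[OF t0] sm by simp
  also have "detL K (\<lambda>r s. M0 t r s + corr t cs (M0 t) r s) =
      (t - 1/2/A)^2 * (t - 1/2/B)^2 * t^2 - 4 * (1/2/A) * (1/2/B) * (1/2/C)^2 * (t - 1/2/A) * (t - 1/2/B)"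
    using detK[OF t0 tp tq] unfolding A_def B_def C_def .
  also have "t ^ (2 * (a - 1) + 2 * (b - 1) + 2 * (k - 2)) * ((t - 1/2/A)^2 * (t - 1/2/B)^2 * t^2 - 4 * (1/2/A) * (1/2/B) * (1/2/C)^2 * (t - 1/2/A) * (t - 1/2/B))
    = 1/16 * ((2 * t^a - 1) * (2 * t^b - 1) * ((2 * t^a - 1) * (2 * t^b - 1) * t^(2 * (k - 1)) - 1))"
    unfolding te ta tb tk by (rule alg, insert A1, auto)
  finally show ?thesis .
qed

end

theorem lemma5p4:
  fixes k a b :: nat
  assumes "a \<ge> 3" and "b \<ge> 3" and "k \<ge> 2"
  shows "char_poly (P_nb (cb_vertices k a b) (cb_edges k a b)) =
    [:1/16 :: real:] * ((([:2:] * monom 1 a) - 1) * (([:2:] * monom 1 b) - 1) *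
      ((([:2:] * monom 1 a) - 1) * (([:2:] * monom 1 b) - 1) * monom 1 (2 * (k - 1)) - 1))"
    (is "?p = ?q")
proof -
  interpret cbl k a b using assms by unfold_locales
  have ev: "poly ?p t = poly ?q t" if "t > 1" for t :: real
    using final_eval[OF that] by (simp add: poly_monom)
  show ?thesis
  proof (rule ccontr)
    assume "?p \<noteq> ?q"
    hence "?p - ?q \<noteq> 0" by simp
    hence fin: "finite {x. poly (?p - ?q) x = 0}" by (rule poly_roots_finite)
    have "{1<..} \<subseteq> {x. poly (?p - ?q) x = 0}" using ev by auto
    hence "finite {(1::real)<..}" using fin finite_subset by blast
    thus False using infinite_Ioi by blast
  qed
qed

end
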